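(* Let $C$ be a finite non-degenerate projective configuration with lines $l_0,l_1,\dots,l_n$, let $\mathcal{P}_0$ be the set of its points not incident to $l_0$, and let $\mathcal{A}=\{(i,p)\in\{1,\dots,n\}\times\mathcal{P}_0 : p \text{ is incident to } l_i\}$. Let $L=\bigoplus_{k\ge1}L_k$ be the free Lie algebra over $\mathbb{Z}$ on $x_1,\dots,x_n$, graded by degree, $H=L_1$, $S_p=\sum_{j:\,p\prec l_j}x_j$ for $p\in\mathcal{P}_0$ (sum over $j\in\{1,\dots,n\}$), $R_2\subset L_2$ the subgroup spanned by the elements $\bar r(i,p)=[x_i,S_p]$ for $(i,p)\in\mathcal{A}$ with $i\neq\min\{j: l_j\succ p\}$ (these elements form a $\mathbb{Z}$-basis of $R_2$), $R_3=[H,R_2]\subset L_3$ and $P_3=L_3/R_3$. Let $A=H^{\mathcal{A}}$ (all maps $\mathcal{A}\to H$) and define $\tilde\tau:A\to\mathrm{Hom}(R_2,P_3)$ on the basis of $R_2$ by $$\tilde\tau a(\bar r(i,p))=[[x_i,a(i,p)],S_p]+\Big[x_i,\sum_{j:\,p\prec l_j}[x_j,a(j,p)]\Big]+R_3 .$$ Let $U\subseteq A$ be the subgroup generated by the following elements: $a^{(0)}_{i,p}$ for $(i,p)\in\mathcal{A}$, given by $a^{(0)}_{i,p}(j,q)=\delta_{i,j}\delta_{p,q}x_i$; $a^{(1)}_{i,p}$ for $i\in\{1,\dots,n\}$, $p\in\mathcal{P}_0$, given by $a^{(1)}_{i,p}(j,q)=\delta_{p,q}x_i$; and $a^{(2)}_{i,p_1,p_2}$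 for $i\in\{1,\dots,n\}$ and $p_1,p_2\in\mathcal{P}_0$ both incident to $l_i$ (not necessarily distinct), given by $a^{(2)}_{i,p_1,p_2}(j,q)=\delta_{i,j}\delta_{p_1,q}S_{p_2}$. Then $U\subseteq\ker\tilde\tau$.
   Context: A projective configuration is a triple $(\mathcal{L},\mathcal{P},\succ)$ of a set of lines $\mathcal{L}$, a set of points $\mathcal{P}$ and an incidence relation $\succ$ between lines and points (written $l\succ p$ or $p\prec l$) such that any two distinct lines are incident to a unique common point, and every point is incident to at least two lines. It is non-degenerate if it has more than one point. $[\cdot,\cdot]$ denotes the Lie bracket in $L$. *)

theory Defs
  imports Main "HOL-Library.Poly_Mapping" "HOL-Library.Function_Algebras"
begin

definition proj_config :: "'l set \<Rightarrow> 'p set \<Rightarrow> ('l \<Rightarrow> 'p \<Rightarrow> bool) \<Rightarrow> bool" where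
  "proj_config Ls Ps inc \<longleftrightarrow>
     (\<forall>l\<in>Ls. \<forall>m\<in>Ls. l \<noteq> m \<longrightarrow> (\<exists>!p. p \<in> Ps \<and> inc l p \<and> inc m p)) \<and>
     (\<forall>p\<in>Ps. \<exists>l\<in>Ls. \<exists>m\<in>Ls. l \<noteq> m \<and> inc l p \<and> inc m p)"

definition non_degenerate :: "'p set \<Rightarrow> bool" where
  "non_degenerate Ps \<longleftrightarrow> (\<exists>p\<in>Ps. \<exists>q\<in>Ps. p \<noteq> q)"

inductive_set zspan :: "'a::ab_group_add set \<Rightarrow> 'a set" for G where
  zspan_zero: "0 \<in> zspan G"
| zspan_gen: "x \<in> G \<Longrightarrow> x \<in> zspan G"
| zspan_add: "x \<in> zspan G \<Longrightarrow> y \<in> zspan G \<Longrightarrow> x + y \<in> zspan G"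
| zspan_neg: "x \<in> zspan G \<Longrightarrow> - x \<in> zspan G"

datatype mag = X nat | Br mag mag

fun leaves :: "mag \<Rightarrow> nat set" where
  "leaves (X i) = {i}"
| "leaves (Br s t) = leaves s \<union> leaves t"

text \<open>Free non-associative ring over Z on the generators in G.\<close>
definition mag_alg :: "nat set \<Rightarrow> (mag \<Rightarrow>\<^sub>0 int) set" where
  "mag_alg G = {f. \<forall>s\<in>Poly_Mapping.keys f. leaves s \<subseteq> G}"

definition gen :: "nat \<Rightarrow> mag \<Rightarrow>\<^sub>0 int" where
  "gen i = Poly_Mapping.single (X i) 1"

definition lbr :: "(mag \<Rightarrow>\<^sub>0 int) \<Rightarrow> (mag \<Rightarrow>\<^sub>0 int) \<Rightarrow> (mag \<Rightarrow>\<^sub>0 int)" where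
  "lbr f g = (\<Sum>s\<in>Poly_Mapping.keys f. \<Sum>t\<in>Poly_Mapping.keys g.
               Poly_Mapping.single (Br s t) (Poly_Mapping.lookup f s * Poly_Mapping.lookup g t))"

text \<open>The two-sided ideal of the free non-associative ring on G generated by
  the Lie ring axioms [a,a] and the Jacobi expressions.  The free Lie ring on G
  is mag_alg G modulo this ideal.\<close>
inductive_set lie_ideal :: "nat set \<Rightarrow> (mag \<Rightarrow>\<^sub>0 int) set" for G where
  li_alt: "a \<in> mag_alg G \<Longrightarrow> lbr a a \<in> lie_ideal G"
| li_jac: "a \<in> mag_alg G \<Longrightarrow> b \<in> mag_alg G \<Longrightarrow> c \<in> mag_alg G \<Longrightarrow>
    lbr a (lbr b c) + lbr b (lbr c a) + lbr c (lbr a b) \<in> lie_ideal G"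
| li_zero: "0 \<in> lie_ideal G"
| li_add: "u \<in> lie_ideal G \<Longrightarrow> v \<in> lie_ideal G \<Longrightarrow> u + v \<in> lie_ideal G"
| li_neg: "u \<in> lie_ideal G \<Longrightarrow> - u \<in> lie_ideal G"
| li_brl: "u \<in> lie_ideal G \<Longrightarrow> a \<in> mag_alg G \<Longrightarrow> lbr a u \<in> lie_ideal G"
| li_brr: "u \<in> lie_ideal G \<Longrightarrow> a \<in> mag_alg G \<Longrightarrow> lbr u a \<in> lie_ideal G"

definition P0 :: "'p set \<Rightarrow> ('l \<Rightarrow> 'p \<Rightarrow> bool) \<Rightarrow> (nat \<Rightarrow> 'l) \<Rightarrow> 'p set" where
  "P0 Ps inc l = {p \<in> Ps. \<not> inc (l 0) p}"

definition Acal :: "nat \<Rightarrow> 'p set \<Rightarrow> ('l \<Rightarrow> 'p \<Rightarrow> bool) \<Rightarrow> (nat \<Rightarrow> 'l) \<Rightarrow> (nat \<times> 'p) set" where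
  "Acal n Ps inc l = {(i, p). i \<in> {1..n} \<and> p \<in> P0 Ps inc l \<and> inc (l i) p}"

definition Sp :: "nat \<Rightarrow> ('l \<Rightarrow> 'p \<Rightarrow> bool) \<Rightarrow> (nat \<Rightarrow> 'l) \<Rightarrow> 'p \<Rightarrow> mag \<Rightarrow>\<^sub>0 int" where
  "Sp n inc l p = (\<Sum>j\<in>{j\<in>{1..n}. inc (l j) p}. gen j)"

definition minline :: "nat \<Rightarrow> ('l \<Rightarrow> 'p \<Rightarrow> bool) \<Rightarrow> (nat \<Rightarrow> 'l) \<Rightarrow> 'p \<Rightarrow> nat" where
  "minline n inc l p = Min {j\<in>{1..n}. inc (l j) p}"

definition Hgrp :: "nat \<Rightarrow> (mag \<Rightarrow>\<^sub>0 int) set" where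
  "Hgrp n = zspan (gen ` {1..n})"

definition R2 :: "nat \<Rightarrow> 'p set \<Rightarrow> ('l \<Rightarrow> 'p \<Rightarrow> bool) \<Rightarrow> (nat \<Rightarrow> 'l) \<Rightarrow> (mag \<Rightarrow>\<^sub>0 int) set" where
  "R2 n Ps inc l = zspan {lbr (gen i) (Sp n inc l p) | i p.
       (i, p) \<in> Acal n Ps inc l \<and> i \<noteq> minline n inc l p}"

definition R3 :: "nat \<Rightarrow> 'p set \<Rightarrow> ('l \<Rightarrow> 'p \<Rightarrow> bool) \<Rightarrow> (nat \<Rightarrow> 'l) \<Rightarrow> (mag \<Rightarrow>\<^sub>0 int) set" where
  "R3 n Ps inc l = zspan {lbr h r | h r. h \<in> Hgrp n \<and> r \<in> R2 n Ps inc l}"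

definition tau_expr :: "nat \<Rightarrow> ('l \<Rightarrow> 'p \<Rightarrow> bool) \<Rightarrow> (nat \<Rightarrow> 'l)
     \<Rightarrow> (nat \<times> 'p \<Rightarrow> mag \<Rightarrow>\<^sub>0 int) \<Rightarrow> nat \<Rightarrow> 'p \<Rightarrow> mag \<Rightarrow>\<^sub>0 int" where
  "tau_expr n inc l a i p =
     lbr (lbr (gen i) (a (i, p))) (Sp n inc l p)
     + lbr (gen i) (\<Sum>j\<in>{j\<in>{1..n}. inc (l j) p}. lbr (gen j) (a (j, p)))"

definition Agrp :: "nat \<Rightarrow> 'p set \<Rightarrow> ('l \<Rightarrow> 'p \<Rightarrow> bool) \<Rightarrow> (nat \<Rightarrow> 'l) \<Rightarrow> (nat \<times> 'p \<Rightarrow> mag \<Rightarrow>\<^sub>0 int) set" where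
  "Agrp n Ps inc l = {a. (\<forall>x\<in>Acal n Ps inc l. a x \<in> Hgrp n) \<and> (\<forall>x. x \<notin> Acal n Ps inc l \<longrightarrow> a x = 0)}"

text \<open>ker tau~: tau~ a vanishes on every basis element r(i,p) of R_2, i.e. the
  class of tau_expr in P_3 = L_3/R_3 is zero, i.e. tau_expr is congruent modulo
  the Lie ideal to an element of (the representatives of) R_3.\<close>
definition ker_tau :: "nat \<Rightarrow> 'p set \<Rightarrow> ('l \<Rightarrow> 'p \<Rightarrow> bool) \<Rightarrow> (nat \<Rightarrow> 'l) \<Rightarrow> (nat \<times> 'p \<Rightarrow> mag \<Rightarrow>\<^sub>0 int) set" where
  "ker_tau n Ps inc l = {a \<in> Agrp n Ps inc l. \<forall>(i, p)\<in>Acal n Ps inc l. i \<noteq> minline n inc l p \<longrightarrow>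
      (\<exists>r\<in>R3 n Ps inc l. tau_expr n inc l a i p - r \<in> lie_ideal {1..n})}"

definition a0 :: "nat \<Rightarrow> 'p set \<Rightarrow> ('l \<Rightarrow> 'p \<Rightarrow> bool) \<Rightarrow> (nat \<Rightarrow> 'l) \<Rightarrow> nat \<Rightarrow> 'p \<Rightarrow> (nat \<times> 'p \<Rightarrow> mag \<Rightarrow>\<^sub>0 int)" where
  "a0 n Ps inc l i p = (\<lambda>(j, q). if (j, q) \<in> Acal n Ps inc l \<and> j = i \<and> q = p then gen i else 0)"

definition a1 :: "nat \<Rightarrow> 'p set \<Rightarrow> ('l \<Rightarrow> 'p \<Rightarrow> bool) \<Rightarrow> (nat \<Rightarrow> 'l) \<Rightarrow> nat \<Rightarrow> 'p \<Rightarrow> (nat \<times> 'p \<Rightarrow> mag \<Rightarrow>\<^sub>0 int)" where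
  "a1 n Ps inc l i p = (\<lambda>(j, q). if (j, q) \<in> Acal n Ps inc l \<and> q = p then gen i else 0)"

definition a2 :: "nat \<Rightarrow> 'p set \<Rightarrow> ('l \<Rightarrow> 'p \<Rightarrow> bool) \<Rightarrow> (nat \<Rightarrow> 'l) \<Rightarrow> nat \<Rightarrow> 'p \<Rightarrow> 'p \<Rightarrow> (nat \<times> 'p \<Rightarrow> mag \<Rightarrow>\<^sub>0 int)" where
  "a2 n Ps inc l i p1 p2 = (\<lambda>(j, q). if (j, q) \<in> Acal n Ps inc l \<and> j = i \<and> q = p1 then Sp n inc l p2 else 0)"

definition Ugrp :: "nat \<Rightarrow> 'p set \<Rightarrow> ('l \<Rightarrow> 'p \<Rightarrow> bool) \<Rightarrow> (nat \<Rightarrow> 'l) \<Rightarrow> (nat \<times> 'p \<Rightarrow> mag \<Rightarrow>\<^sub>0 int) set" where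
  "Ugrp n Ps inc l = zspan (
      {a0 n Ps inc l i p | i p. (i, p) \<in> Acal n Ps inc l}
    \<union> {a1 n Ps inc l i p | i p. i \<in> {1..n} \<and> p \<in> P0 Ps inc l}
    \<union> {a2 n Ps inc l i p1 p2 | i p1 p2. i \<in> {1..n} \<and> p1 \<in> P0 Ps inc l \<and> p2 \<in> P0 Ps inc l
          \<and> inc (l i) p1 \<and> inc (l i) p2})"

end

theory Submission
  imports Defs
begin

lemma lookup_lbr:
  "Poly_Mapping.lookup (lbr f g) u =
     (case u of X i \<Rightarrow> 0 | Br s t \<Rightarrow> Poly_Mapping.lookup f s * Poly_Mapping.lookup g t)"
proof (cases u)
  case (X i)
  then show ?thesis by (simp add: lbr_def lookup_sum lookup_single)
next
  case (Br s0 t0)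
  have "Poly_Mapping.lookup (lbr f g) u =
     (\<Sum>s\<in>Poly_Mapping.keys f. if s = s0 then (\<Sum>t\<in>Poly_Mapping.keys g. if t = t0 then
        Poly_Mapping.lookup f s * Poly_Mapping.lookup g t else 0) else 0)"
    unfolding lbr_def lookup_sum lookup_single Br
    by (intro sum.cong refl) (auto simp: when_def intro!: sum.neutral)
  also have "\<dots> = Poly_Mapping.lookup f s0 * Poly_Mapping.lookup g t0"
    by (auto simp: in_keys_iff)
  finally show ?thesis using Br by simp
qed

lemma lbr_add_left: "lbr (a + b) c = lbr a c + lbr b c"
  by (rule poly_mapping_eqI) (simp add: lookup_lbr lookup_add algebra_simps split: mag.split)
lemma lbr_add_right: "lbr c (a + b) = lbr c a + lbr c b"
  by (rule poly_mapping_eqI) (simp add: lookup_lbr lookup_add algebra_simps split: mag.split)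
lemma lbr_neg_left: "lbr (- a) c = - lbr a c"
  by (rule poly_mapping_eqI) (simp add: lookup_lbr split: mag.split)
lemma lbr_neg_right: "lbr c (- a) = - lbr c a"
  by (rule poly_mapping_eqI) (simp add: lookup_lbr split: mag.split)
lemma lbr_diff_left: "lbr (a - b) c = lbr a c - lbr b c"
  by (rule poly_mapping_eqI) (simp add: lookup_lbr lookup_minus algebra_simps split: mag.split)
lemma lbr_diff_right: "lbr c (a - b) = lbr c a - lbr c b"
  by (rule poly_mapping_eqI) (simp add: lookup_lbr lookup_minus algebra_simps split: mag.split)
lemma lbr_zero_left[simp]: "lbr 0 c = 0"
  by (rule poly_mapping_eqI) (simp add: lookup_lbr split: mag.split)
lemma lbr_zero_right[simp]: "lbr c 0 = 0"
  by (rule poly_mapping_eqI) (simp add: lookup_lbr split: mag.split)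
lemma lbr_sum_left: "lbr (sum f A) c = (\<Sum>x\<in>A. lbr (f x) c)"
  by (rule poly_mapping_eqI) (simp add: lookup_lbr lookup_sum sum_distrib_right split: mag.split)
lemma lbr_sum_right: "lbr c (sum f A) = (\<Sum>x\<in>A. lbr c (f x))"
  by (rule poly_mapping_eqI) (simp add: lookup_lbr lookup_sum sum_distrib_left split: mag.split)

lemma mag_alg_iff: "f \<in> mag_alg G \<longleftrightarrow> (\<forall>s. Poly_Mapping.lookup f s \<noteq> 0 \<longrightarrow> leaves s \<subseteq> G)"
  by (auto simp: mag_alg_def in_keys_iff)

lemma mag_alg_lbr: "a \<in> mag_alg G \<Longrightarrow> b \<in> mag_alg G \<Longrightarrow> lbr a b \<in> mag_alg G"
  unfolding mag_alg_iff
proof (intro allI impI)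
  fix u assume a: "\<forall>s. Poly_Mapping.lookup a s \<noteq> 0 \<longrightarrow> leaves s \<subseteq> G"
    and b: "\<forall>s. Poly_Mapping.lookup b s \<noteq> 0 \<longrightarrow> leaves s \<subseteq> G"
    and u: "Poly_Mapping.lookup (lbr a b) u \<noteq> 0"
  show "leaves u \<subseteq> G"
  proof (cases u)
    case (X i) then show ?thesis using u by (simp add: lookup_lbr)
  next
    case (Br s t)
    then have "Poly_Mapping.lookup a s \<noteq> 0" "Poly_Mapping.lookup b t \<noteq> 0" using u by (auto simp: lookup_lbr)
    then show ?thesis using a b Br by simp
  qed
qed
lemma mag_alg_add: "a \<in> mag_alg G \<Longrightarrow> b \<in> mag_alg G \<Longrightarrow> a + b \<in> mag_alg G"
  unfolding mag_alg_iff
proof (intro allI impI)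
  fix u assume a: "\<forall>s. Poly_Mapping.lookup a s \<noteq> 0 \<longrightarrow> leaves s \<subseteq> G"
    and b: "\<forall>s. Poly_Mapping.lookup b s \<noteq> 0 \<longrightarrow> leaves s \<subseteq> G"
    and u: "Poly_Mapping.lookup (a + b) u \<noteq> 0"
  then have "Poly_Mapping.lookup a u \<noteq> 0 \<or> Poly_Mapping.lookup b u \<noteq> 0"
    by (auto simp: lookup_add)
  then show "leaves u \<subseteq> G" using a b by blast
qed
lemma mag_alg_neg: "a \<in> mag_alg G \<Longrightarrow> - a \<in> mag_alg G"
  unfolding mag_alg_iff by auto
lemma mag_alg_zero: "0 \<in> mag_alg G"
  unfolding mag_alg_iff by auto
lemma mag_alg_gen: "i \<in> G \<Longrightarrow> gen i \<in> mag_alg G"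
  unfolding mag_alg_iff gen_def by (auto simp: lookup_single when_def)

lemma zspan_mag_alg: "A \<subseteq> mag_alg G \<Longrightarrow> zspan A \<subseteq> mag_alg G"
proof
  fix x assume A: "A \<subseteq> mag_alg G" and "x \<in> zspan A"
  from this(2) show "x \<in> mag_alg G"
    by (induction rule: zspan.induct) (use A in \<open>auto intro: mag_alg_zero mag_alg_add mag_alg_neg\<close>)
qed

lemma zspan_sum: "(\<And>x. x \<in> A \<Longrightarrow> f x \<in> zspan G) \<Longrightarrow> sum f A \<in> zspan G"
proof (induction A rule: infinite_finite_induct)
  case (infinite A) then show ?case by (simp add: zspan_zero)
next
  case empty then show ?case by (simp add: zspan_zero)
next
  case (insert x F) then show ?case by (simp add: zspan_add)
qed

lemma zspan_diff: "x \<in> zspan G \<Longrightarrow> y \<in> zspan G \<Longrightarrow> x - y \<in> zspan G"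
  using zspan_add[OF _ zspan_neg, of x G y] by simp

lemma li_diff: "u \<in> lie_ideal G \<Longrightarrow> v \<in> lie_ideal G \<Longrightarrow> u - v \<in> lie_ideal G"
  using li_add[OF _ li_neg, of u G v] by simp

lemma li_antisym:
  assumes "a \<in> mag_alg G" "b \<in> mag_alg G"
  shows "lbr a b + lbr b a \<in> lie_ideal G"
proof -
  have "lbr (a + b) (a + b) - lbr a a - lbr b b \<in> lie_ideal G"
    using assms by (intro li_diff li_alt mag_alg_add)
  moreover have "lbr (a + b) (a + b) - lbr a a - lbr b b = lbr a b + lbr b a"
    by (simp add: lbr_add_left lbr_add_right algebra_simps)
  ultimately show ?thesis by simp
qed

lemma grp_id1: "(A::'a::ab_group_add) + B - (- C) = (B + D + C) + (A + E) - (E + D)"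
  by (simp add: algebra_simps)

lemma grp_id2: "(P::'a::ab_group_add) + Q - (R - T) = (P - U) + (U + T) + (Q - R)"
  by (simp add: algebra_simps)

lemma grp_id3: "(A::'a::ab_group_add) + B + (C + D) = (A + C) + (B + D)"
  by (simp add: algebra_simps)

lemma Hgrp_gen: "j \<in> {1..n} \<Longrightarrow> gen j \<in> Hgrp n"
  unfolding Hgrp_def by (rule zspan_gen) auto

lemma Sp_Hgrp: "Sp n inc l p \<in> Hgrp n"
  unfolding Sp_def Hgrp_def by (rule zspan_sum) (auto intro: zspan_gen)

lemma Hgrp_mag: "Hgrp n \<subseteq> mag_alg {1..n}"
  unfolding Hgrp_def by (rule zspan_mag_alg) (auto intro: mag_alg_gen)

lemma Sp_mag: "Sp n inc l p \<in> mag_alg {1..n}"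
  using Sp_Hgrp[of n inc l p] Hgrp_mag[of n] by blast

lemma gen_mag: "j \<in> {1..n} \<Longrightarrow> gen j \<in> mag_alg {1..n}"
  by (rule mag_alg_gen)

lemma R2_mag: "R2 n Ps inc l \<subseteq> mag_alg {1..n}"
  unfolding R2_def
proof (rule zspan_mag_alg, rule subsetI)
  fix x assume "x \<in> {lbr (gen i) (Sp n inc l p) | i p.
       (i, p) \<in> Acal n Ps inc l \<and> i \<noteq> minline n inc l p}"
  then obtain i p where x: "x = lbr (gen i) (Sp n inc l p)" and i: "i \<in> {1..n}"
    unfolding Acal_def by blast
  show "x \<in> mag_alg {1..n}" unfolding x by (rule mag_alg_lbr[OF gen_mag[OF i] Sp_mag])
qed

lemma R2_gen: "(i, p) \<in> Acal n Ps inc l \<Longrightarrow> i \<noteq> minline n inc l p \<Longrightarrow>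
   lbr (gen i) (Sp n inc l p) \<in> R2 n Ps inc l"
  unfolding R2_def by (rule zspan_gen) blast

lemma R2_neg: "x \<in> R2 n Ps inc l \<Longrightarrow> - x \<in> R2 n Ps inc l"
  unfolding R2_def by (rule zspan_neg)

lemma R2_sum: "(\<And>x. x \<in> A \<Longrightarrow> f x \<in> R2 n Ps inc l) \<Longrightarrow> sum f A \<in> R2 n Ps inc l"
  unfolding R2_def by (rule zspan_sum)

lemma R3_gen: "h \<in> Hgrp n \<Longrightarrow> r \<in> R2 n Ps inc l \<Longrightarrow> lbr h r \<in> R3 n Ps inc l"
  unfolding R3_def by (rule zspan_gen) blast

lemma tau_expr_add: "tau_expr n inc l (a + b) i p = tau_expr n inc l a i p + tau_expr n inc l b i p"
  unfolding tau_expr_def plus_fun_apply lbr_add_left lbr_add_right sum.distrib by (rule grp_id3)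

lemma tau_expr_neg: "tau_expr n inc l (- a) i p = - tau_expr n inc l a i p"
  unfolding tau_expr_def uminus_apply lbr_neg_left lbr_neg_right sum_negf by simp

lemma tau_expr_zero: "tau_expr n inc l 0 i p = 0"
  by (simp add: tau_expr_def)

lemma tau_expr_cong:
  assumes "\<And>j. j \<in> {j\<in>{1..n}. inc (l j) p} \<Longrightarrow> a (j, p) = f j"
    and "k \<in> {j\<in>{1..n}. inc (l j) p}"
  shows "tau_expr n inc l a k p = lbr (lbr (gen k) (f k)) (Sp n inc l p)
      + lbr (gen k) (\<Sum>j\<in>{j\<in>{1..n}. inc (l j) p}. lbr (gen j) (f j))"
proof -
  have "(\<Sum>j\<in>{j\<in>{1..n}. inc (l j) p}. lbr (gen j) (a (j, p))) =
     (\<Sum>j\<in>{j\<in>{1..n}. inc (l j) p}. lbr (gen j) (f j))"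
    by (rule sum.cong) (simp_all only: assms)
  then show ?thesis unfolding tau_expr_def using assms by simp
qed

lemma ker_zero: "0 \<in> ker_tau n Ps inc l"
proof -
  have "0 \<in> Agrp n Ps inc l" unfolding Agrp_def Hgrp_def by (auto intro: zspan_zero)
  moreover have "(0::mag \<Rightarrow>\<^sub>0 int) \<in> R3 n Ps inc l" unfolding R3_def by (rule zspan_zero)
  ultimately show ?thesis unfolding ker_tau_def
    by (auto simp: tau_expr_zero intro!: bexI[of _ 0] li_zero)
qed

lemma Hgrp_add: "x \<in> Hgrp n \<Longrightarrow> y \<in> Hgrp n \<Longrightarrow> x + y \<in> Hgrp n"
  unfolding Hgrp_def by (rule zspan_add)

lemma Hgrp_neg: "x \<in> Hgrp n \<Longrightarrow> - x \<in> Hgrp n"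
  unfolding Hgrp_def by (rule zspan_neg)

lemma Agrp_add: "a \<in> Agrp n Ps inc l \<Longrightarrow> b \<in> Agrp n Ps inc l \<Longrightarrow> a + b \<in> Agrp n Ps inc l"
  unfolding Agrp_def mem_Collect_eq plus_fun_apply by (auto intro: Hgrp_add)

lemma Agrp_neg: "a \<in> Agrp n Ps inc l \<Longrightarrow> - a \<in> Agrp n Ps inc l"
  unfolding Agrp_def mem_Collect_eq uminus_apply by (auto intro: Hgrp_neg)

lemma R3_add: "x \<in> R3 n Ps inc l \<Longrightarrow> y \<in> R3 n Ps inc l \<Longrightarrow> x + y \<in> R3 n Ps inc l"
  unfolding R3_def by (rule zspan_add)

lemma R3_neg: "x \<in> R3 n Ps inc l \<Longrightarrow> - x \<in> R3 n Ps inc l"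
  unfolding R3_def by (rule zspan_neg)

lemma R3_diff: "x \<in> R3 n Ps inc l \<Longrightarrow> y \<in> R3 n Ps inc l \<Longrightarrow> x - y \<in> R3 n Ps inc l"
  unfolding R3_def by (rule zspan_diff)

lemma ker_D1: "a \<in> ker_tau n Ps inc l \<Longrightarrow> a \<in> Agrp n Ps inc l"
  unfolding ker_tau_def by blast

lemma ker_D2: "a \<in> ker_tau n Ps inc l \<Longrightarrow> (i, p) \<in> Acal n Ps inc l \<Longrightarrow> i \<noteq> minline n inc l p \<Longrightarrow>
   \<exists>r\<in>R3 n Ps inc l. tau_expr n inc l a i p - r \<in> lie_ideal {1..n}"
  unfolding ker_tau_def by blast

lemma ker_intro:
  assumes "a \<in> Agrp n Ps inc l"
    and "\<And>k p. (k, p) \<in> Acal n Ps inc l \<Longrightarrow> k \<noteq> minline n inc l p \<Longrightarrow>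
       \<exists>r\<in>R3 n Ps inc l. tau_expr n inc l a k p - r \<in> lie_ideal {1..n}"
  shows "a \<in> ker_tau n Ps inc l"
  using assms unfolding ker_tau_def by blast

lemma ker_add: "a \<in> ker_tau n Ps inc l \<Longrightarrow> b \<in> ker_tau n Ps inc l \<Longrightarrow> a + b \<in> ker_tau n Ps inc l"
proof -
  assume a: "a \<in> ker_tau n Ps inc l" and b: "b \<in> ker_tau n Ps inc l"
  show ?thesis
  proof (rule ker_intro)
    show "a + b \<in> Agrp n Ps inc l" by (rule Agrp_add[OF ker_D1[OF a] ker_D1[OF b]])
  next
    fix i p assume ip: "(i, p) \<in> Acal n Ps inc l" "i \<noteq> minline n inc l p"
    obtain ra where ra: "ra \<in> R3 n Ps inc l" "tau_expr n inc l a i p - ra \<in> lie_ideal {1..n}"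
      using ker_D2[OF a ip] by blast
    obtain rb where rb: "rb \<in> R3 n Ps inc l" "tau_expr n inc l b i p - rb \<in> lie_ideal {1..n}"
      using ker_D2[OF b ip] by blast
    have eq: "tau_expr n inc l (a + b) i p - (ra + rb) =
        (tau_expr n inc l a i p - ra) + (tau_expr n inc l b i p - rb)"
      unfolding tau_expr_add by (simp add: algebra_simps)
    have "tau_expr n inc l (a + b) i p - (ra + rb) \<in> lie_ideal {1..n}"
      unfolding eq by (rule li_add[OF ra(2) rb(2)])
    with R3_add[OF ra(1) rb(1)] show "\<exists>r\<in>R3 n Ps inc l. tau_expr n inc l (a + b) i p - r \<in> lie_ideal {1..n}"
      by blast
  qed
qed

lemma ker_neg: "a \<in> ker_tau n Ps inc l \<Longrightarrow> - a \<in> ker_tau n Ps inc l"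
proof -
  assume a: "a \<in> ker_tau n Ps inc l"
  show ?thesis
  proof (rule ker_intro)
    show "- a \<in> Agrp n Ps inc l" by (rule Agrp_neg[OF ker_D1[OF a]])
  next
    fix i p assume ip: "(i, p) \<in> Acal n Ps inc l" "i \<noteq> minline n inc l p"
    obtain ra where ra: "ra \<in> R3 n Ps inc l" "tau_expr n inc l a i p - ra \<in> lie_ideal {1..n}"
      using ker_D2[OF a ip] by blast
    have eq: "tau_expr n inc l (- a) i p - (- ra) = - (tau_expr n inc l a i p - ra)"
      unfolding tau_expr_neg by simp
    have "tau_expr n inc l (- a) i p - (- ra) \<in> lie_ideal {1..n}"
      unfolding eq by (rule li_neg[OF ra(2)])
    with R3_neg[OF ra(1)] show "\<exists>r\<in>R3 n Ps inc l. tau_expr n inc l (- a) i p - r \<in> lie_ideal {1..n}"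
      by blast
  qed
qed

lemma Hgrp_zero: "0 \<in> Hgrp n"
  unfolding Hgrp_def by (rule zspan_zero)

lemma Acal_iff: "(j, p) \<in> Acal n Ps inc l \<longleftrightarrow> j \<in> {1..n} \<and> p \<in> P0 Ps inc l \<and> inc (l j) p"
  by (simp add: Acal_def)

lemma R3_zero: "0 \<in> R3 n Ps inc l"
  unfolding R3_def by (rule zspan_zero)


lemma ker_a0:
  assumes iq: "(i, q) \<in> Acal n Ps inc l"
  shows "a0 n Ps inc l i q \<in> ker_tau n Ps inc l"
proof (rule ker_intro)
  show "a0 n Ps inc l i q \<in> Agrp n Ps inc l"
    unfolding Agrp_def a0_def using Hgrp_zero by (auto simp: Acal_iff Hgrp_gen)
next
  fix k p assume kp: "(k, p) \<in> Acal n Ps inc l" and "k \<noteq> minline n inc l p"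
  let ?J = "{j\<in>{1..n}. inc (l j) p}"
  define f where "f j = (if j = i \<and> p = q then gen i else 0)" for j
  have i: "i \<in> {1..n}" using iq by (simp add: Acal_iff)
  have k: "k \<in> {1..n}" using kp by (simp add: Acal_iff)
  have tau: "tau_expr n inc l (a0 n Ps inc l i q) k p = lbr (lbr (gen k) (f k)) (Sp n inc l p)
      + lbr (gen k) (\<Sum>j\<in>?J. lbr (gen j) (f j))"
    by (rule tau_expr_cong) (use kp in \<open>auto simp: a0_def f_def Acal_iff\<close>)
  have gi: "lbr (gen i) (gen i) \<in> lie_ideal {1..n}" by (rule li_alt[OF gen_mag[OF i]])
  have "tau_expr n inc l (a0 n Ps inc l i q) k p \<in> lie_ideal {1..n}"
  proof (cases "p = q")
    case True
    have iJ: "i \<in> ?J" using iq True by (simp add: Acal_iff)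
    have "(\<Sum>j\<in>?J. lbr (gen j) (f j)) = (\<Sum>j\<in>?J. if j = i then lbr (gen i) (gen i) else 0)"
      by (rule sum.cong) (auto simp: f_def True)
    also have "\<dots> = lbr (gen i) (gen i)" using iJ by (simp add: sum.delta)
    finally have s: "(\<Sum>j\<in>?J. lbr (gen j) (f j)) = lbr (gen i) (gen i)" .
    show ?thesis
    proof (cases "k = i")
      case True
      have fk: "lbr (gen k) (f k) = lbr (gen i) (gen i)" using True \<open>p = q\<close> by (simp add: f_def)
      show ?thesis unfolding tau s fk
        by (intro li_add li_brr[OF gi Sp_mag] li_brl[OF gi gen_mag[OF k]])
    next
      case False
      have fk: "f k = 0" using False by (simp add: f_def)
      show ?thesis unfolding tau s fk using li_brl[OF gi gen_mag[OF k]] by simp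
    qed
  next
    case False
    then show ?thesis unfolding tau by (simp add: f_def li_zero)
  qed
  then show "\<exists>r\<in>R3 n Ps inc l. tau_expr n inc l (a0 n Ps inc l i q) k p - r \<in> lie_ideal {1..n}"
    using R3_zero by (intro bexI[of _ 0]) auto
qed


lemma ker_a1:
  assumes i: "i \<in> {1..n}" and q: "q \<in> P0 Ps inc l"
  shows "a1 n Ps inc l i q \<in> ker_tau n Ps inc l"
proof (rule ker_intro)
  show "a1 n Ps inc l i q \<in> Agrp n Ps inc l"
    unfolding Agrp_def a1_def using Hgrp_zero i by (auto simp: Acal_iff Hgrp_gen)
next
  fix k p assume kp: "(k, p) \<in> Acal n Ps inc l" and km: "k \<noteq> minline n inc l p"
  let ?J = "{j\<in>{1..n}. inc (l j) p}"
  let ?S = "Sp n inc l p"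
  define f where "f j = (if p = q then gen i else 0)" for j :: nat
  have k: "k \<in> {1..n}" using kp by (simp add: Acal_iff)
  have tau: "tau_expr n inc l (a1 n Ps inc l i q) k p = lbr (lbr (gen k) (f k)) ?S
      + lbr (gen k) (\<Sum>j\<in>?J. lbr (gen j) (f j))"
    by (rule tau_expr_cong) (use kp in \<open>auto simp: a1_def f_def Acal_iff\<close>)
  show "\<exists>r\<in>R3 n Ps inc l. tau_expr n inc l (a1 n Ps inc l i q) k p - r \<in> lie_ideal {1..n}"
  proof (cases "p = q")
    case False
    then show ?thesis unfolding tau using R3_zero by (intro bexI[of _ 0]) (auto simp: f_def li_zero)
  next
    case True
    have s: "(\<Sum>j\<in>?J. lbr (gen j) (f j)) = lbr ?S (gen i)"
      by (simp add: f_def True Sp_def lbr_sum_left)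
    have fk: "f k = gen i" by (simp add: f_def True)
    define xk where "xk = gen k"
    define xi where "xi = gen i"
    have mk: "xk \<in> mag_alg {1..n}" unfolding xk_def by (rule gen_mag[OF k])
    have mi: "xi \<in> mag_alg {1..n}" unfolding xi_def by (rule gen_mag[OF i])
    have mS: "?S \<in> mag_alg {1..n}" by (rule Sp_mag)
    define r where "r = - lbr xi (lbr xk ?S)"
    have r: "r \<in> R3 n Ps inc l" unfolding r_def R3_def xi_def xk_def
      by (rule zspan_neg, fold R3_def, rule R3_gen[OF Hgrp_gen[OF i] R2_gen[OF kp km]])
    have jac: "lbr xk (lbr ?S xi) + lbr ?S (lbr xi xk) + lbr xi (lbr xk ?S) \<in> lie_ideal {1..n}"
      by (rule li_jac[OF mk mS mi])
    have A1: "lbr (lbr xk xi) ?S + lbr ?S (lbr xk xi) \<in> lie_ideal {1..n}"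
      by (rule li_antisym[OF mag_alg_lbr[OF mk mi] mS])
    have B: "lbr ?S (lbr xk xi + lbr xi xk) \<in> lie_ideal {1..n}"
      by (rule li_brl[OF li_antisym[OF mk mi] mS])
    have eq: "tau_expr n inc l (a1 n Ps inc l i q) k p - r =
      (lbr xk (lbr ?S xi) + lbr ?S (lbr xi xk) + lbr xi (lbr xk ?S))
      + (lbr (lbr xk xi) ?S + lbr ?S (lbr xk xi)) - lbr ?S (lbr xk xi + lbr xi xk)"
      unfolding tau s fk r_def lbr_add_right xk_def[symmetric] xi_def[symmetric] by (rule grp_id1)
    have "tau_expr n inc l (a1 n Ps inc l i q) k p - r \<in> lie_ideal {1..n}"
      unfolding eq by (rule li_diff[OF li_add[OF jac A1] B])
    with r show ?thesis by blast
  qed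
qed

lemma rho_exists:
  assumes ip: "(i, p) \<in> Acal n Ps inc l"
  shows "\<exists>\<rho>\<in>R2 n Ps inc l. lbr (gen i) (Sp n inc l p) - \<rho> \<in> lie_ideal {1..n}"
proof (cases "i = minline n inc l p")
  case False
  then show ?thesis using R2_gen[OF ip False] li_zero by (intro bexI) auto
next
  case True
  let ?J = "{j\<in>{1..n}. inc (l j) p}"
  let ?S = "Sp n inc l p"
  define \<rho> where "\<rho> = - (\<Sum>j\<in>?J - {i}. lbr (gen j) ?S)"
  have \<rho>R2: "\<rho> \<in> R2 n Ps inc l" unfolding \<rho>_def
  proof (rule R2_neg, rule R2_sum)
    fix j assume j: "j \<in> ?J - {i}"
    have "(j, p) \<in> Acal n Ps inc l" using j ip by (simp add: Acal_iff)
    moreover have "j \<noteq> minline n inc l p" using j True by auto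
    ultimately show "lbr (gen j) ?S \<in> R2 n Ps inc l" by (rule R2_gen)
  qed
  have iJ: "i \<in> ?J" using ip by (simp add: Acal_iff)
  have "lbr (gen i) ?S - \<rho> = (\<Sum>j\<in>?J. lbr (gen j) ?S)"
    unfolding \<rho>_def using iJ by (simp add: sum.remove)
  also have "\<dots> = lbr ?S ?S" by (simp add: Sp_def lbr_sum_left)
  finally have "lbr (gen i) ?S - \<rho> \<in> lie_ideal {1..n}" using li_alt[OF Sp_mag] by simp
  with \<rho>R2 show ?thesis by blast
qed


lemma ker_a2:
  assumes i: "i \<in> {1..n}" and p1: "p1 \<in> P0 Ps inc l" and p2: "p2 \<in> P0 Ps inc l"
    and ip1: "inc (l i) p1" and ip2: "inc (l i) p2"
  shows "a2 n Ps inc l i p1 p2 \<in> ker_tau n Ps inc l"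
proof (rule ker_intro)
  show "a2 n Ps inc l i p1 p2 \<in> Agrp n Ps inc l"
    unfolding Agrp_def a2_def using Hgrp_zero Sp_Hgrp by (auto simp: Acal_iff)
next
  fix k p assume kp: "(k, p) \<in> Acal n Ps inc l" and km: "k \<noteq> minline n inc l p"
  let ?J = "{j\<in>{1..n}. inc (l j) p}"
  let ?S = "Sp n inc l p"
  let ?S2 = "Sp n inc l p2"
  define f where "f j = (if j = i \<and> p = p1 then ?S2 else 0)" for j
  have k: "k \<in> {1..n}" using kp by (simp add: Acal_iff)
  have tau: "tau_expr n inc l (a2 n Ps inc l i p1 p2) k p = lbr (lbr (gen k) (f k)) ?S
      + lbr (gen k) (\<Sum>j\<in>?J. lbr (gen j) (f j))"
    by (rule tau_expr_cong) (use kp in \<open>auto simp: a2_def f_def Acal_iff\<close>)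
  show "\<exists>r\<in>R3 n Ps inc l. tau_expr n inc l (a2 n Ps inc l i p1 p2) k p - r \<in> lie_ideal {1..n}"
  proof (cases "p = p1")
    case False
    then show ?thesis unfolding tau using R3_zero by (intro bexI[of _ 0]) (auto simp: f_def li_zero)
  next
    case True
    have iJ: "i \<in> ?J" using i ip1 True by simp
    have "(\<Sum>j\<in>?J. lbr (gen j) (f j)) = (\<Sum>j\<in>?J. if j = i then lbr (gen i) ?S2 else 0)"
      by (rule sum.cong) (auto simp: f_def True)
    also have "\<dots> = lbr (gen i) ?S2" using iJ by (simp add: sum.delta)
    finally have s: "(\<Sum>j\<in>?J. lbr (gen j) (f j)) = lbr (gen i) ?S2" .
    have "(i, p2) \<in> Acal n Ps inc l" using i p2 ip2 by (simp add: Acal_iff)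
    from rho_exists[OF this] obtain \<rho> where \<rho>: "\<rho> \<in> R2 n Ps inc l"
      and d: "lbr (gen i) ?S2 - \<rho> \<in> lie_ideal {1..n}" by blast
    define \<delta> where "\<delta> = lbr (gen i) ?S2 - \<rho>"
    have mr: "\<rho> \<in> mag_alg {1..n}" using \<rho> R2_mag by blast
    have mk: "gen k \<in> mag_alg {1..n}" by (rule gen_mag[OF k])
    have mS: "?S \<in> mag_alg {1..n}" by (rule Sp_mag)
    have dI: "\<delta> \<in> lie_ideal {1..n}" using d unfolding \<delta>_def .
    have r1: "lbr (gen k) \<rho> \<in> R3 n Ps inc l" by (rule R3_gen[OF Hgrp_gen[OF k] \<rho>])
    have r2: "lbr ?S \<rho> \<in> R3 n Ps inc l" by (rule R3_gen[OF Sp_Hgrp \<rho>])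
    show ?thesis
    proof (cases "k = i")
      case True
      define r where "r = lbr (gen k) \<rho> - lbr ?S \<rho>"
      have fk: "lbr (gen k) (f k) = lbr (gen i) ?S2" using True \<open>p = p1\<close> by (simp add: f_def)
      have r: "r \<in> R3 n Ps inc l" unfolding r_def R3_def
        by (rule zspan_diff, fold R3_def, rule r1, rule r2)
      have eq: "tau_expr n inc l (a2 n Ps inc l i p1 p2) k p - r =
          lbr \<delta> ?S + (lbr \<rho> ?S + lbr ?S \<rho>) + lbr (gen k) \<delta>"
        unfolding tau s r_def \<delta>_def fk lbr_diff_left lbr_diff_right by (rule grp_id2)
      have "lbr \<delta> ?S + (lbr \<rho> ?S + lbr ?S \<rho>) + lbr (gen k) \<delta> \<in> lie_ideal {1..n}"
        by (intro li_add li_brr[OF dI mS] li_antisym[OF mr mS] li_brl[OF dI mk])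
      then show ?thesis using r unfolding eq[symmetric] by blast
    next
      case False
      have eq: "tau_expr n inc l (a2 n Ps inc l i p1 p2) k p - lbr (gen k) \<rho> = lbr (gen k) \<delta>"
        unfolding tau s \<delta>_def using False
        by (simp add: f_def lbr_diff_right)
      show ?thesis using r1 li_brl[OF dI mk] unfolding eq[symmetric] by blast
    qed
  qed
qed

theorem proposition2p4:
  fixes Ls :: "'l set" and Ps :: "'p set" and inc :: "'l \<Rightarrow> 'p \<Rightarrow> bool"
    and n :: nat and l :: "nat \<Rightarrow> 'l"
  assumes "proj_config Ls Ps inc"
    and "finite Ls" and "finite Ps"
    and "non_degenerate Ps"
    and "bij_betw l {0..n} Ls"
  shows "Ugrp n Ps inc l \<subseteq> ker_tau n Ps inc l"
proof
  fix a assume "a \<in> Ugrp n Ps inc l"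
  then show "a \<in> ker_tau n Ps inc l" unfolding Ugrp_def
  proof (induction rule: zspan.induct)
    case zspan_zero then show ?case by (rule ker_zero)
  next
    case (zspan_gen x) then show ?case by (auto intro: ker_a0 ker_a1 ker_a2)
  next
    case (zspan_add x y) then show ?case by (blast intro: ker_add)
  next
    case (zspan_neg x) then show ?case by (blast intro: ker_neg)
  qed
qed

end
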